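(* Let $I$ be a nontrivial ideal of $\mathbb{N}\times\mathbb{N}$ containing all sets of the form $H\times\mathbb{N}$ with $H$ a finite subset of $\mathbb{N}$. If $(X,\tau)$ is $I$-sequentially compact in the sense of double sequences, then $(X,\tau)$ is countably compact.
   Context: An ideal $I$ on $\mathbb{N}\times\mathbb{N}$ is a family of subsets closed under finite unions and under taking subsets; it is nontrivial if $I\ne\{\emptyset\}$ and $\mathbb{N}\times\mathbb{N}\notin I$. $y\in X$ is an $I$-cluster point of a double sequence $\{x_{ij}\}$ in $X$ if for every open $U\ni y$, $\{(m,n)\in\mathbb{N}\times\mathbb{N}: x_{mn}\in U\}\notin I$. $(X,\tau)$ is $I$-sequentially compact in the sense of double sequences if every double sequence in $X$ has an $I$-cluster point. *)

theory Defs
  imports "HOL-Analysis.Analysis"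
begin

definition is_ideal :: "('a set) set \<Rightarrow> bool" where
  "is_ideal I \<longleftrightarrow> {} \<in> I \<and> (\<forall>A\<in>I. \<forall>B\<in>I. A \<union> B \<in> I) \<and> (\<forall>A\<in>I. \<forall>B. B \<subseteq> A \<longrightarrow> B \<in> I)"

definition nontrivial_ideal :: "('a set) set \<Rightarrow> bool" where
  "nontrivial_ideal I \<longleftrightarrow> is_ideal I \<and> I \<noteq> {{}} \<and> UNIV \<notin> I"

definition I_cluster_point ::
  "'a topology \<Rightarrow> ((nat \<times> nat) set) set \<Rightarrow> (nat \<Rightarrow> nat \<Rightarrow> 'a) \<Rightarrow> 'a \<Rightarrow> bool" where
  "I_cluster_point X I x y \<longleftrightarrow> y \<in> topspace X \<and>
     (\<forall>U. openin X U \<longrightarrow> y \<in> U \<longrightarrow> {(m, n). x m n \<in> U} \<notin> I)"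

definition I_seq_compact_double :: "'a topology \<Rightarrow> ((nat \<times> nat) set) set \<Rightarrow> bool" where
  "I_seq_compact_double X I \<longleftrightarrow>
     (\<forall>x. (\<forall>m n. x m n \<in> topspace X) \<longrightarrow> (\<exists>y. I_cluster_point X I x y))"

definition countably_compact_space :: "'a topology \<Rightarrow> bool" where
  "countably_compact_space X \<longleftrightarrow>
     (\<forall>\<U>. countable \<U> \<longrightarrow> (\<forall>U\<in>\<U>. openin X U) \<longrightarrow> topspace X \<subseteq> \<Union>\<U> \<longrightarrow>
        (\<exists>\<F>. finite \<F> \<and> \<F> \<subseteq> \<U> \<and> topspace X \<subseteq> \<Union>\<F>))"

end

theory Submission
  imports Defs
begin

theorem theorem4p4:
  fixes X :: "'a topology" and I :: "((nat \<times> nat) set) set"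
  assumes "nontrivial_ideal I"
    and "\<And>H. finite H \<Longrightarrow> H \<times> (UNIV :: nat set) \<in> I"
    and "I_seq_compact_double X I"
  shows "countably_compact_space X"
  unfolding countably_compact_space_def
proof (intro allI impI)
  fix \<U> :: "'a set set"
  assume cU: "countable \<U>" and oU: "\<forall>U\<in>\<U>. openin X U" and cov: "topspace X \<subseteq> \<Union>\<U>"
  show "\<exists>\<F>. finite \<F> \<and> \<F> \<subseteq> \<U> \<and> topspace X \<subseteq> \<Union>\<F>"
  proof (rule ccontr)
    assume nf: "\<not> ?thesis"
    have ne: "\<U> \<noteq> {}"
    proof
      assume "\<U> = {}"
      hence "finite {} \<and> {} \<subseteq> \<U> \<and> topspace X \<subseteq> \<Union>{}" using cov by simp
      hence "\<exists>F. finite F \<and> F \<subseteq> \<U> \<and> topspace X \<subseteq> \<Union>F" by (rule exI)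
      thus False using nf by (rule notE[rotated])
    qed
    define g where "g = from_nat_into \<U>"
    have rg: "range g = \<U>" unfolding g_def using range_from_nat_into[OF ne cU] .
    have ex: "\<exists>p. p \<in> topspace X \<and> p \<notin> (\<Union>k\<le>m. g k)" for m
    proof -
      have "\<not> topspace X \<subseteq> \<Union>(g ` {..m})"
        using nf rg by blast
      thus ?thesis by auto
    qed
    have "\<forall>m. \<exists>p. p \<in> topspace X \<and> p \<notin> (\<Union>k\<le>m. g k)" using ex by blast
    from choice[OF this] obtain p where p0: "\<forall>m. p m \<in> topspace X \<and> p m \<notin> (\<Union>k\<le>m. g k)" by blast
    have p: "\<And>m. p m \<in> topspace X \<and> p m \<notin> (\<Union>k\<le>m. g k)" using p0 by blast
    obtain y where y: "I_cluster_point X I (\<lambda>m n. p m) y"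
      using assms(3)[unfolded I_seq_compact_double_def, rule_format, of "\<lambda>m n. p m"] p by (simp, blast)
    hence yt: "y \<in> topspace X" unfolding I_cluster_point_def by blast
    then obtain k where yk: "y \<in> g k" using cov rg by blast
    have og: "openin X (g k)" using oU rg by blast
    have nI: "{(m, n). p m \<in> g k} \<notin> I"
      using y og yk unfolding I_cluster_point_def by blast
    have sub: "{(m, n). p m \<in> g k} \<subseteq> {..<k} \<times> (UNIV :: nat set)"
    proof
      fix z assume "z \<in> {(m, n). p m \<in> g k}"
      then obtain m n where z: "z = (m, n)" "p m \<in> g k" by blast
      have "\<not> k \<le> m" using p[of m] z(2) by auto
      thus "z \<in> {..<k} \<times> UNIV" using z by auto
    qed
    have "{..<k} \<times> (UNIV :: nat set) \<in> I" using assms(2) by simp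
    hence "{(m, n). p m \<in> g k} \<in> I"
      using assms(1) sub unfolding nontrivial_ideal_def is_ideal_def by blast
    thus False using nI by blast
  qed
qed

end
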